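(* Let $E$ be a dark minimal ceer, and let $R$ be an arbitrary equivalence relation on $\omega$ such that $R$ has infinitely many equivalence classes and $R\supseteq E$. Then $R$ is minimal.
   Context: All equivalence relations have domain $\omega$. For equivalence relations $R,S$, $R\leq_c S$ means there is a computable function $f$ with $xRy\Leftrightarrow f(x)Sf(y)$ for all $x,y$; $R\equiv_c S$ means $R\leq_c S$ and $S\leq_c R$. $\mathrm{Id}$ is the identity relation on $\omega$, and for $n\geq1$, $\mathrm{Id}_n$ is the relation $x\,\mathrm{Id}_n\,y\Leftrightarrow n\mid(x-y)$. A ceer is a computably enumerable equivalence relation. A ceer is dark if it is $\leq_c$-incomparable with $\mathrm{Id}$. An equivalence relation $R$ is minimal if it has infinitely many classes and for every equivalence relation $S$, $S\leq_c R$ implies $S\equiv_c R$ or $S\equiv_c\mathrm{Id}_n$ for some $n$. *)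

theory Defs
  imports Main "HOL-Library.Nat_Bijection"
begin

datatype recf = Z | Sc | Proj nat | Cn recf "recf list" | Pr recf recf | Mn recf

text \<open>eval c xs y: the program c on argument list xs halts with output y.
  Arities are not tracked (surplus arguments are ignored); this yields exactly
  the partial recursive functions.\<close>
inductive eval :: "recf \<Rightarrow> nat list \<Rightarrow> nat \<Rightarrow> bool" where
  eval_Z: "eval Z xs 0"
| eval_S: "eval Sc (x # xs) (Suc x)"
| eval_Proj: "i < length xs \<Longrightarrow> eval (Proj i) xs (xs ! i)"
| eval_Cn: "list_all2 (\<lambda>g y. eval g xs y) gs ys \<Longrightarrow> eval f ys z \<Longrightarrow> eval (Cn f gs) xs z"
| eval_Pr0: "eval f xs y \<Longrightarrow> eval (Pr f g) (0 # xs) y"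
| eval_PrS: "eval (Pr f g) (n # xs) y \<Longrightarrow> eval g (n # y # xs) z \<Longrightarrow> eval (Pr f g) (Suc n # xs) z"
| eval_Mn: "eval f (n # xs) 0 \<Longrightarrow> (\<forall>m<n. \<exists>k. eval f (m # xs) (Suc k)) \<Longrightarrow> eval (Mn f) xs n"

definition computable :: "(nat \<Rightarrow> nat) \<Rightarrow> bool" where
  "computable f \<longleftrightarrow> (\<exists>c. \<forall>x. eval c [x] (f x))"

definition ce_set :: "nat set \<Rightarrow> bool" where
  "ce_set A \<longleftrightarrow> (\<exists>c. \<forall>x. x \<in> A \<longleftrightarrow> (\<exists>y. eval c [x] y))"

definition ceer :: "(nat \<Rightarrow> nat \<Rightarrow> bool) \<Rightarrow> bool" where
  "ceer R \<longleftrightarrow> equivp R \<and> ce_set {prod_encode (x, y) | x y. R x y}"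

definition creduce :: "(nat \<Rightarrow> nat \<Rightarrow> bool) \<Rightarrow> (nat \<Rightarrow> nat \<Rightarrow> bool) \<Rightarrow> bool" (infix "\<le>\<^sub>c" 50) where
  "R \<le>\<^sub>c S \<longleftrightarrow> (\<exists>f. computable f \<and> (\<forall>x y. R x y \<longleftrightarrow> S (f x) (f y)))"

definition cequiv :: "(nat \<Rightarrow> nat \<Rightarrow> bool) \<Rightarrow> (nat \<Rightarrow> nat \<Rightarrow> bool) \<Rightarrow> bool" (infix "\<equiv>\<^sub>c" 50) where
  "R \<equiv>\<^sub>c S \<longleftrightarrow> R \<le>\<^sub>c S \<and> S \<le>\<^sub>c R"

definition IdR :: "nat \<Rightarrow> nat \<Rightarrow> bool" where
  "IdR x y \<longleftrightarrow> x = y"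

definition IdN :: "nat \<Rightarrow> nat \<Rightarrow> nat \<Rightarrow> bool" where
  "IdN n x y \<longleftrightarrow> int n dvd (int x - int y)"

definition inf_classes :: "(nat \<Rightarrow> nat \<Rightarrow> bool) \<Rightarrow> bool" where
  "inf_classes R \<longleftrightarrow> infinite (UNIV // {(x, y). R x y})"

definition dark :: "(nat \<Rightarrow> nat \<Rightarrow> bool) \<Rightarrow> bool" where
  "dark R \<longleftrightarrow> ceer R \<and> \<not> R \<le>\<^sub>c IdR \<and> \<not> IdR \<le>\<^sub>c R"

definition minimal_er :: "(nat \<Rightarrow> nat \<Rightarrow> bool) \<Rightarrow> bool" where
  "minimal_er R \<longleftrightarrow> inf_classes R \<and>
     (\<forall>T. equivp T \<longrightarrow> T \<le>\<^sub>c R \<longrightarrow> T \<equiv>\<^sub>c R \<or> (\<exists>n\<ge>1. T \<equiv>\<^sub>c IdN n))"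

end

theory Submission
  imports Defs
begin

definition rc :: "nat \<Rightarrow> (nat list \<Rightarrow> nat) \<Rightarrow> bool" where
  "rc k F \<longleftrightarrow> (\<exists>c. \<forall>xs. length xs = k \<longrightarrow> eval c xs (F xs))"

lemma rc_cong: "rc k F \<Longrightarrow> (\<And>xs. length xs = k \<Longrightarrow> F xs = G xs) \<Longrightarrow> rc k G"
  unfolding rc_def by metis

lemma rc_cong': "rc k F \<Longrightarrow> k = k' \<Longrightarrow> (\<And>xs. length xs = k \<Longrightarrow> F xs = G xs) \<Longrightarrow> rc k' G"
  unfolding rc_def by metis

fun cprog :: "nat \<Rightarrow> recf" where
  "cprog 0 = Z" | "cprog (Suc a) = Cn Sc [cprog a]"

lemma eval_cprog: "eval (cprog a) xs a"
proof (induction a)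
  case 0 then show ?case by (simp add: eval_Z)
next
  case (Suc a)
  have "list_all2 (\<lambda>g y. eval g xs y) [cprog a] [a]" using Suc by simp
  moreover have "eval Sc [a] (Suc a)" by (rule eval_S)
  ultimately show ?case unfolding cprog.simps by (intro eval_Cn[where ys="[a]"]) auto
qed

lemma rc_const[intro]: "rc k (\<lambda>_. a)"
  unfolding rc_def using eval_cprog by blast

lemma rc_proj: "i < k \<Longrightarrow> rc k (\<lambda>xs. xs ! i)"
  unfolding rc_def using eval_Proj by metis

lemma rc_succ: "rc 1 (\<lambda>xs. Suc (xs ! 0))"
  unfolding rc_def
proof (intro exI allI impI)
  fix xs :: "nat list" assume "length xs = 1"
  then obtain x where "xs = [x]" by (cases xs) auto
  then show "eval Sc xs (Suc (xs ! 0))" by (simp add: eval_S)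
qed

lemma rc_comp:
  assumes "rc (length Gs) F" "\<forall>G\<in>set Gs. rc k G"
  shows "rc k (\<lambda>xs. F (map (\<lambda>G. G xs) Gs))"
proof -
  have "\<exists>cs. length cs = length Gs \<and> (\<forall>i<length Gs. \<forall>xs. length xs = k \<longrightarrow> eval (cs ! i) xs ((Gs ! i) xs))"
    using assms(2)
  proof (induction Gs)
    case Nil then show ?case by simp
  next
    case (Cons G Gs)
    then obtain cs where cs: "length cs = length Gs" "\<forall>i<length Gs. \<forall>xs. length xs = k \<longrightarrow> eval (cs ! i) xs ((Gs ! i) xs)"
      by auto
    from Cons.prems obtain c where c: "\<forall>xs. length xs = k \<longrightarrow> eval c xs (G xs)" unfolding rc_def by auto
    show ?case
    proof (intro exI conjI allI impI)
      show "length (c # cs) = length (G # Gs)" using cs by simp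
      fix i and xs :: "nat list" assume "i < length (G # Gs)" "length xs = k"
      then show "eval ((c # cs) ! i) xs (((G # Gs) ! i) xs)"
        using cs c by (cases i) auto
    qed
  qed
  then obtain cs where cs: "length cs = length Gs" "\<forall>i<length Gs. \<forall>xs. length xs = k \<longrightarrow> eval (cs ! i) xs ((Gs ! i) xs)"
    by auto
  from assms(1) obtain cf where cf: "\<forall>ys. length ys = length Gs \<longrightarrow> eval cf ys (F ys)" unfolding rc_def by auto
  show ?thesis unfolding rc_def
  proof (intro exI allI impI)
    fix xs :: "nat list" assume xs: "length xs = k"
    have "list_all2 (\<lambda>g y. eval g xs y) cs (map (\<lambda>G. G xs) Gs)"
      using cs xs by (auto simp: list_all2_conv_all_nth)
    moreover have "eval cf (map (\<lambda>G. G xs) Gs) (F (map (\<lambda>G. G xs) Gs))" using cf by simp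
    ultimately show "eval (Cn cf cs) xs (F (map (\<lambda>G. G xs) Gs))" by (rule eval_Cn)
  qed
qed

fun prec :: "(nat list \<Rightarrow> nat) \<Rightarrow> (nat list \<Rightarrow> nat) \<Rightarrow> nat \<Rightarrow> nat list \<Rightarrow> nat" where
  "prec F G 0 ys = F ys"
| "prec F G (Suc n) ys = G (n # prec F G n ys # ys)"

lemma rc_prec:
  assumes "rc k F" "rc (Suc (Suc k)) G"
  shows "rc (Suc k) (\<lambda>xs. prec F G (hd xs) (tl xs))"
proof -
  obtain cf where cf: "\<forall>xs. length xs = k \<longrightarrow> eval cf xs (F xs)" using assms(1) unfolding rc_def by auto
  obtain cg where cg: "\<forall>xs. length xs = Suc (Suc k) \<longrightarrow> eval cg xs (G xs)" using assms(2) unfolding rc_def by auto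
  have *: "eval (Pr cf cg) (n # ys) (prec F G n ys)" if "length ys = k" for n ys
  proof (induction n)
    case 0 then show ?case using cf that by (simp add: eval_Pr0)
  next
    case (Suc n) then show ?case using cg that by (simp add: eval_PrS)
  qed
  show ?thesis unfolding rc_def
  proof (intro exI allI impI)
    fix xs :: "nat list" assume "length xs = Suc k"
    then obtain n ys where "xs = n # ys" "length ys = k" by (cases xs) auto
    then show "eval (Pr cf cg) xs (prec F G (hd xs) (tl xs))" using * by simp
  qed
qed

lemma rc_mn:
  assumes "rc (Suc k) P" "\<forall>xs. length xs = k \<longrightarrow> (\<exists>n. P (n # xs) = 0)"
  shows "rc k (\<lambda>xs. LEAST n. P (n # xs) = 0)"
proof -
  obtain c where c: "\<And>xs. length xs = Suc k \<Longrightarrow> eval c xs (P xs)" using assms(1) unfolding rc_def by auto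
  show ?thesis unfolding rc_def
  proof (intro exI allI impI)
    fix xs :: "nat list" assume xs: "length xs = k"
    have ce: "eval c (m # xs) (P (m # xs))" for m using c xs by simp
    define n where "n = (LEAST n. P (n # xs) = 0)"
    obtain n0 where "P (n0 # xs) = 0" using assms(2) xs by blast
    then have n0: "P (n # xs) = 0" unfolding n_def by (rule LeastI)
    have "\<forall>m<n. \<exists>j. eval c (m # xs) (Suc j)"
    proof (intro allI impI)
      fix m assume "m < n"
      then have "P (m # xs) \<noteq> 0" unfolding n_def by (rule not_less_Least)
      then obtain j where "P (m # xs) = Suc j" by (cases "P (m # xs)") auto
      then show "\<exists>j. eval c (m # xs) (Suc j)" using ce[of m] by auto
    qed
    moreover have "eval c (n # xs) 0" using ce[of n] n0 by simp
    ultimately have "eval (Mn c) xs n" by (intro eval_Mn)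
    then show "eval (Mn c) xs (LEAST n. P (n # xs) = 0)" unfolding n_def .
  qed
qed

lemma rc_comp1: "rc 1 F \<Longrightarrow> rc k A \<Longrightarrow> rc k (\<lambda>xs. F [A xs])"
  using rc_comp[of "[A]" F k] by simp
lemma rc_comp2: "rc 2 F \<Longrightarrow> rc k A \<Longrightarrow> rc k B \<Longrightarrow> rc k (\<lambda>xs. F [A xs, B xs])"
  using rc_comp[of "[A,B]" F k] by (simp add: numeral_2_eq_2)

lemma rc_Suc[intro]: "rc k A \<Longrightarrow> rc k (\<lambda>xs. Suc (A xs))"
  using rc_comp1[OF rc_succ, of k A] by simp

lemma rc_add_base: "rc 2 (\<lambda>xs. xs ! 0 + xs ! 1)"
proof -
  have "rc (Suc 1) (\<lambda>xs. prec (\<lambda>ys. ys ! 0) (\<lambda>zs. Suc (zs ! 1)) (hd xs) (tl xs))"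
    by (intro rc_prec rc_proj rc_Suc) auto
  moreover have "prec (\<lambda>ys. ys ! 0) (\<lambda>zs. Suc (zs ! 1)) n ys = n + ys ! 0" for n ys
    by (induction n) auto
  ultimately show ?thesis
    by (elim rc_cong') (auto simp: hd_conv_nth nth_tl length_Suc_conv)
qed

lemma rc_add[intro]: "rc k A \<Longrightarrow> rc k B \<Longrightarrow> rc k (\<lambda>xs. A xs + B xs)"
  using rc_comp2[OF rc_add_base, of k A B] by simp

lemma rc_proj'[intro]: "i < k \<Longrightarrow> rc k (\<lambda>xs. xs ! i)" by (rule rc_proj)

lemma rc_mult_base: "rc 2 (\<lambda>xs. xs ! 0 * xs ! 1)"
proof -
  have "rc (Suc 1) (\<lambda>xs. prec (\<lambda>ys. 0) (\<lambda>zs. zs ! 1 + zs ! 2) (hd xs) (tl xs))"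
    by (intro rc_prec rc_add rc_proj' rc_const) auto
  moreover have "prec (\<lambda>ys. 0) (\<lambda>zs. zs ! 1 + zs ! 2) n ys = n * ys ! 0" for n ys
    by (induction n) auto
  ultimately show ?thesis
    by (elim rc_cong') (auto simp: hd_conv_nth nth_tl length_Suc_conv)
qed

lemma rc_mult[intro]: "rc k A \<Longrightarrow> rc k B \<Longrightarrow> rc k (\<lambda>xs. A xs * B xs)"
  using rc_comp2[OF rc_mult_base, of k A B] by simp

lemma rc_pred_base: "rc 1 (\<lambda>xs. xs ! 0 - 1)"
proof -
  have "rc (Suc 0) (\<lambda>xs. prec (\<lambda>ys. 0) (\<lambda>zs. zs ! 0) (hd xs) (tl xs))"
    by (intro rc_prec rc_proj' rc_const) auto
  moreover have "prec (\<lambda>ys. 0) (\<lambda>zs. zs ! 0) n ys = n - 1" for n ys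
    by (induction n) auto
  ultimately show ?thesis
    by (elim rc_cong') (auto simp: hd_conv_nth nth_tl length_Suc_conv)
qed

lemma rc_pred[intro]: "rc k A \<Longrightarrow> rc k (\<lambda>xs. A xs - 1)"
  using rc_comp1[OF rc_pred_base, of k A] by simp

lemma rc_sub_base: "rc 2 (\<lambda>xs. xs ! 1 - xs ! 0)"
proof -
  have "rc (Suc 1) (\<lambda>xs. prec (\<lambda>ys. ys ! 0) (\<lambda>zs. zs ! 1 - 1) (hd xs) (tl xs))"
    by (intro rc_prec rc_pred rc_proj' rc_const) auto
  moreover have "prec (\<lambda>ys. ys ! 0) (\<lambda>zs. zs ! 1 - 1) n ys = ys ! 0 - n" for n ys
    by (induction n) auto
  ultimately show ?thesis
    by (elim rc_cong') (auto simp: hd_conv_nth nth_tl length_Suc_conv)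
qed

lemma rc_sub[intro]: "rc k A \<Longrightarrow> rc k B \<Longrightarrow> rc k (\<lambda>xs. A xs - B xs)"
  using rc_comp2[OF rc_sub_base, of k B A] by simp

lemma rc_if[intro]: "rc k A \<Longrightarrow> rc k B \<Longrightarrow> rc k C \<Longrightarrow> rc k (\<lambda>xs. if A xs = 0 then B xs else C xs)"
proof -
  assume a: "rc k A" "rc k B" "rc k C"
  have "rc k (\<lambda>xs. (1 - A xs) * B xs + (1 - (1 - A xs)) * C xs)"
    using a by (intro rc_add rc_mult rc_sub rc_const)
  then show ?thesis by (rule rc_cong) auto
qed

lemma computable_rc: "computable f \<longleftrightarrow> rc 1 (\<lambda>xs. f (xs ! 0))"
  unfolding computable_def rc_def
proof
  assume "\<exists>c. \<forall>x. eval c [x] (f x)"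
  then obtain c where c: "\<forall>x. eval c [x] (f x)" by auto
  have "eval c xs (f (xs ! 0))" if "length xs = 1" for xs
  proof -
    from that obtain x where "xs = [x]" by (cases xs) auto
    then show ?thesis using c by simp
  qed
  then show "\<exists>c. \<forall>xs. length xs = 1 \<longrightarrow> eval c xs (f (xs ! 0))" by blast
next
  assume "\<exists>c. \<forall>xs. length xs = 1 \<longrightarrow> eval c xs (f (xs ! 0))"
  then obtain c where c: "\<forall>xs. length xs = 1 \<longrightarrow> eval c xs (f (xs ! 0))" by auto
  have "eval c [x] (f x)" for x using c[rule_format, of "[x]"] by simp
  then show "\<exists>c. \<forall>x. eval c [x] (f x)" by blast
qed

lemma rc_fun: "computable f \<Longrightarrow> rc k A \<Longrightarrow> rc k (\<lambda>xs. f (A xs))"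
  using rc_comp1[of "\<lambda>xs. f (xs ! 0)" k A] by (simp add: computable_rc)

lemma computable_comp: "computable f \<Longrightarrow> computable g \<Longrightarrow> computable (\<lambda>x. f (g x))"
  unfolding computable_rc using rc_fun[of f 1 "\<lambda>xs. g (xs ! 0)"] by (simp add: computable_rc)

lemma computable_id: "computable (\<lambda>x. x)"
  unfolding computable_rc by auto

lemma rc_lookup: "rc 1 (\<lambda>xs. if xs ! 0 < N then t (xs ! 0) else 0)"
proof (induction N)
  case 0 then show ?case by (simp add: rc_const)
next
  case (Suc N)
  have "rc 1 (\<lambda>xs. if (xs ! 0 - N) + (N - xs ! 0) = 0 then t N else (if xs ! 0 < N then t (xs ! 0) else 0))"
    using Suc by (intro rc_if rc_add rc_sub rc_const rc_proj') auto
  then show ?case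
    by (rule rc_cong) (case_tac "xs ! 0 < N"; case_tac "xs ! 0 = N"; simp)
qed

lemma rc_mod_base: "n > 0 \<Longrightarrow> rc 1 (\<lambda>xs. xs ! 0 mod n)"
proof -
  have "rc (Suc 0) (\<lambda>xs. prec (\<lambda>ys. 0) (\<lambda>zs. if n - Suc (zs ! 1) = 0 then 0 else Suc (zs ! 1)) (hd xs) (tl xs))"
    by (intro rc_prec rc_if rc_sub rc_Suc rc_proj' rc_const) auto
  moreover have "n > 0 \<Longrightarrow> prec (\<lambda>ys. 0) (\<lambda>zs. if n - Suc (zs ! 1) = 0 then 0 else Suc (zs ! 1)) m ys = m mod n" for m ys
  proof (induction m)
    case 0 then show ?case by simp
  next
    case (Suc m)
    have lt: "m mod n < n" using Suc.prems by simp
    show ?case using Suc lt by (auto simp: mod_Suc simp del: One_nat_def)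
  qed
  moreover assume "n > 0"
  ultimately show ?thesis
    by (elim rc_cong') (auto simp: hd_conv_nth nth_tl length_Suc_conv)
qed

lemma computable_periodic: "n > 0 \<Longrightarrow> computable (\<lambda>z. t (z mod n))"
proof -
  assume n: "n > 0"
  have "rc 1 (\<lambda>xs. (\<lambda>ys. if ys ! 0 < n then t (ys ! 0) else 0) [xs ! 0 mod n])"
    by (rule rc_comp1[OF rc_lookup rc_mod_base[OF n]])
  then show ?thesis unfolding computable_rc by (rule rc_cong) (simp add: n)
qed

fun oprec :: "(nat list \<Rightarrow> nat option) \<Rightarrow> (nat list \<Rightarrow> nat option) \<Rightarrow> nat \<Rightarrow> nat list \<Rightarrow> nat option" where
  "oprec F G 0 xs = F xs"
| "oprec F G (Suc n) xs = (case oprec F G n xs of None \<Rightarrow> None | Some y \<Rightarrow> G (n # y # xs))"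

fun mst :: "(nat \<Rightarrow> nat option) \<Rightarrow> nat \<Rightarrow> nat" where
  "mst F 0 = 0"
| "mst F (Suc j) = (if mst F j \<noteq> 0 then mst F j else (case F j of None \<Rightarrow> 1 | Some 0 \<Rightarrow> j + 2 | Some (Suc _) \<Rightarrow> 0))"

fun ev :: "nat \<Rightarrow> recf \<Rightarrow> nat list \<Rightarrow> nat option" where
  "ev s Z xs = Some 0"
| "ev s Sc xs = (case xs of [] \<Rightarrow> None | x # _ \<Rightarrow> Some (Suc x))"
| "ev s (Proj i) xs = (if i < length xs then Some (xs ! i) else None)"
| "ev s (Cn f gs) xs = (if None \<notin> set (map (\<lambda>g. ev s g xs) gs) then ev s f (map (\<lambda>g. the (ev s g xs)) gs) else None)"
| "ev s (Pr f g) xs = (case xs of [] \<Rightarrow> None | n # ys \<Rightarrow> oprec (ev s f) (ev s g) n ys)"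
| "ev s (Mn f) xs = (let st = mst (\<lambda>m. ev s f (m # xs)) s in if 2 \<le> st then Some (st - 2) else None)"

lemma mst_zero: "mst F j = 0 \<Longrightarrow> m < j \<Longrightarrow> \<exists>k. F m = Some (Suc k)"
proof (induction j)
  case 0 then show ?case by simp
next
  case (Suc j)
  then have z: "mst F j = 0" by (auto split: if_splits)
  show ?case
  proof (cases "m < j")
    case True then show ?thesis using Suc.IH z by blast
  next
    case False
    then have "m = j" using Suc.prems by simp
    then show ?thesis using Suc.prems z by (auto split: option.splits nat.splits)
  qed
qed

lemma mst_sound: "mst F s = j + 2 \<Longrightarrow> j < s \<and> F j = Some 0 \<and> (\<forall>m<j. \<exists>k. F m = Some (Suc k))"
proof (induction s)
  case 0 then show ?case by simp
next
  case (Suc s)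
  show ?case
  proof (cases "mst F s = 0")
    case False then show ?thesis using Suc by auto
  next
    case True
    then have "F s = Some 0 \<and> j = s" using Suc.prems by (auto split: option.splits nat.splits)
    then show ?thesis using mst_zero[OF True] by auto
  qed
qed

lemma mst_complete:
  assumes "j < s" "F j = Some 0" "\<forall>m<j. \<exists>k. F m = Some (Suc k)"
  shows "mst F s = j + 2"
proof -
  have z: "i \<le> j \<Longrightarrow> mst F i = 0" for i
  proof (induction i)
    case 0 then show ?case by simp
  next
    case (Suc i)
    from assms(3) Suc.prems obtain k where "F i = Some (Suc k)" by (meson Suc_le_lessD)
    then show ?case using Suc by simp
  qed
  have "mst F (Suc j + d) = j + 2" for d
  proof (induction d)
    case 0 then show ?case using z[of j] assms(2) by simp
  next
    case (Suc d) then show ?case by simp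
  qed
  from this[of "s - Suc j"] assms(1) show ?thesis by simp
qed

lemma oprec_sound:
  assumes "\<And>ys y. F ys = Some y \<Longrightarrow> eval f ys y" "\<And>ys y. G ys = Some y \<Longrightarrow> eval g ys y"
  shows "oprec F G n ys = Some y \<Longrightarrow> eval (Pr f g) (n # ys) y"
proof (induction n arbitrary: y)
  case 0 then show ?case using assms(1) by (simp add: eval_Pr0)
next
  case (Suc n)
  then obtain y' where y': "oprec F G n ys = Some y'" "G (n # y' # ys) = Some y"
    by (auto split: option.splits)
  then show ?case using Suc.IH assms(2) by (blast intro: eval_PrS)
qed

lemma oprec_mono:
  assumes "\<And>ys y. F ys = Some y \<Longrightarrow> F' ys = Some y" "\<And>ys y. G ys = Some y \<Longrightarrow> G' ys = Some y"
  shows "oprec F G n ys = Some y \<Longrightarrow> oprec F' G' n ys = Some y"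
proof (induction n arbitrary: y)
  case 0 then show ?case using assms(1) by simp
next
  case (Suc n)
  then obtain y' where y': "oprec F G n ys = Some y'" "G (n # y' # ys) = Some y"
    by (auto split: option.splits)
  then show ?case using Suc.IH assms(2) by simp
qed

lemma ev_sound: "ev s c xs = Some y \<Longrightarrow> eval c xs y"
proof (induction c arbitrary: xs y)
  case Z then show ?case by (simp add: eval_Z)
next
  case Sc then show ?case by (auto split: list.splits intro: eval_S)
next
  case (Proj i) then show ?case by (auto split: if_splits intro: eval_Proj)
next
  case (Cn f gs)
  from Cn.prems have nn: "None \<notin> set (map (\<lambda>g. ev s g xs) gs)" by (auto split: if_splits)
  with Cn.prems have fe: "ev s f (map (\<lambda>g. the (ev s g xs)) gs) = Some y" by simp
  have "list_all2 (\<lambda>g y. eval g xs y) gs (map (\<lambda>g. the (ev s g xs)) gs)"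
  proof (rule list_all2_all_nthI)
    fix i assume i: "i < length gs"
    then have "gs ! i \<in> set gs" by simp
    moreover have "ev s (gs ! i) xs = Some (the (ev s (gs ! i) xs))"
      using nn i by (metis in_set_conv_nth length_map nth_map option.exhaust_sel)
    ultimately show "eval (gs ! i) xs (map (\<lambda>g. the (ev s g xs)) gs ! i)"
      using Cn.IH(2) i by simp
  qed simp
  then show ?case using Cn.IH(1)[OF fe] by (rule eval_Cn)
next
  case (Pr f g)
  then obtain n ys where xs: "xs = n # ys" by (cases xs) auto
  show ?case using Pr.prems unfolding xs by (auto intro: oprec_sound[OF Pr.IH(1) Pr.IH(2)])
next
  case (Mn f)
  define F where "F = (\<lambda>m. ev s f (m # xs))"
  from Mn.prems have "mst F s = y + 2" unfolding F_def by (auto simp: Let_def split: if_splits)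
  from mst_sound[OF this] have h: "F y = Some 0" "\<forall>m<y. \<exists>k. F m = Some (Suc k)" by auto
  show ?case
  proof (rule eval_Mn)
    show "eval f (y # xs) 0" using h(1) Mn.IH unfolding F_def by blast
    show "\<forall>m<y. \<exists>k. eval f (m # xs) (Suc k)" using h(2) Mn.IH unfolding F_def by blast
  qed
qed

lemma ev_mono: "ev s c xs = Some y \<Longrightarrow> s \<le> s' \<Longrightarrow> ev s' c xs = Some y"
proof (induction c arbitrary: xs y)
  case Z then show ?case by simp
next
  case Sc then show ?case by simp
next
  case (Proj i) then show ?case by simp
next
  case (Cn f gs)
  from Cn.prems have nn: "None \<notin> set (map (\<lambda>g. ev s g xs) gs)" by (auto split: if_splits)
  with Cn.prems have fe: "ev s f (map (\<lambda>g. the (ev s g xs)) gs) = Some y" by simp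
  have eq: "ev s' g xs = ev s g xs" if "g \<in> set gs" for g
  proof -
    from nn that have "ev s g xs \<noteq> None" by force
    then obtain v where "ev s g xs = Some v" by auto
    then show ?thesis using Cn.IH(2)[OF that] Cn.prems(2) by simp
  qed
  have m1: "map (\<lambda>g. ev s' g xs) gs = map (\<lambda>g. ev s g xs) gs" using eq by simp
  have m2: "map (\<lambda>g. the (ev s' g xs)) gs = map (\<lambda>g. the (ev s g xs)) gs" using eq by simp
  show ?case unfolding ev.simps m1 m2 using nn Cn.IH(1)[OF fe Cn.prems(2)] by simp
next
  case (Pr f g)
  then obtain n ys where xs: "xs = n # ys" by (cases xs) auto
  have A: "\<And>ys y. ev s f ys = Some y \<Longrightarrow> ev s' f ys = Some y" using Pr.IH(1) Pr.prems(2) by blast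
  have B: "\<And>ys y. ev s g ys = Some y \<Longrightarrow> ev s' g ys = Some y" using Pr.IH(2) Pr.prems(2) by blast
  have "oprec (ev s f) (ev s g) n ys = Some y" using Pr.prems(1) unfolding xs by simp
  then have "oprec (ev s' f) (ev s' g) n ys = Some y" using oprec_mono[of "ev s f" "ev s' f" "ev s g" "ev s' g"] A B by blast
  then show ?case unfolding xs by simp
next
  case (Mn f)
  define F where "F = (\<lambda>m. ev s f (m # xs))"
  define F' where "F' = (\<lambda>m. ev s' f (m # xs))"
  from Mn.prems have "mst F s = y + 2" unfolding F_def by (auto simp: Let_def split: if_splits)
  from mst_sound[OF this] have h: "y < s" "F y = Some 0" "\<forall>m<y. \<exists>k. F m = Some (Suc k)" by auto
  have "F' y = Some 0" using h(2) Mn.IH Mn.prems(2) unfolding F_def F'_def by blast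
  moreover have "\<forall>m<y. \<exists>k. F' m = Some (Suc k)" using h(3) Mn.IH Mn.prems(2) unfolding F_def F'_def by blast
  moreover have "y < s'" using h(1) Mn.prems(2) by simp
  ultimately have "mst F' s' = y + 2" by (intro mst_complete)
  then show ?case unfolding F'_def by simp
qed

lemma bounded_choice:
  fixes n :: nat and P :: "nat \<Rightarrow> nat \<Rightarrow> bool"
  assumes "\<forall>m<n. \<exists>s. P m s" "\<And>m s s'. P m s \<Longrightarrow> s \<le> s' \<Longrightarrow> P m s'"
  shows "\<exists>S. \<forall>m<n. P m S"
proof -
  have "(\<forall>m<n. \<exists>s. P m s) \<longrightarrow> (\<exists>S. \<forall>m<n. P m S)"
proof (induction n)
  case 0 then show ?case by simp
next
  case (Suc n)
  show ?case
  proof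
  assume a: "\<forall>m<Suc n. \<exists>s. P m s"
  then obtain S where S: "\<forall>m<n. P m S" using Suc.IH by auto
  obtain s where s: "P n s" using a by auto
  have "\<forall>m<Suc n. P m (max S s)"
  proof (intro allI impI)
    fix m assume "m < Suc n"
    then have "m < n \<or> m = n" by auto
    then show "P m (max S s)"
    proof
      assume "m < n" then have "P m S" using S by blast
      then show ?thesis using assms(2)[of m S "max S s"] by simp
    next
      assume "m = n" then show ?thesis using s assms(2)[of n s "max S s"] by simp
    qed
  qed
  then show "\<exists>S. \<forall>m<Suc n. P m S" by blast
qed
qed
  then show ?thesis using assms(1) by blast
qed

lemma ev_complete: assumes "eval c xs y" shows "\<exists>s. ev s c xs = Some y"
  using assms
proof (induction rule: eval.induct)
  case (eval_Z xs) then show ?case by simp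
next
  case (eval_S x xs) then show ?case by simp
next
  case (eval_Proj i xs) then show ?case by simp
next
  case (eval_Cn xs gs ys f z)
  have "\<exists>s. list_all2 (\<lambda>g y. ev s g xs = Some y) gs ys"
    using eval_Cn(1)
  proof (induction rule: list_all2_induct)
    case Nil then show ?case by simp
  next
    case (Cons g gs y ys)
    then obtain s1 where s1: "ev s1 g xs = Some y" by auto
    obtain s2 where s2: "list_all2 (\<lambda>g y. ev s2 g xs = Some y) gs ys" using Cons by auto
    have "ev (max s1 s2) g xs = Some y" using ev_mono[OF s1] by simp
    moreover have "list_all2 (\<lambda>g y. ev (max s1 s2) g xs = Some y) gs ys"
      using s2 by (rule list_all2_mono) (auto intro: ev_mono)
    ultimately show ?case by blast
  qed
  then obtain s1 where s1: "list_all2 (\<lambda>g y. ev s1 g xs = Some y) gs ys" by auto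
  obtain s2 where s2: "ev s2 f ys = Some z" using eval_Cn by auto
  define S where "S = max s1 s2"
  have l: "list_all2 (\<lambda>g y. ev S g xs = Some y) gs ys"
    using s1 by (rule list_all2_mono) (auto simp: S_def intro: ev_mono)
  then have eq: "map (\<lambda>g. ev S g xs) gs = map Some ys"
    by (induction rule: list_all2_induct) auto
  have m2: "map (\<lambda>g. the (ev S g xs)) gs = ys"
  proof -
    have "map the (map (\<lambda>g. ev S g xs) gs) = map the (map Some ys)" by (simp only: eq)
    then show ?thesis by (simp add: o_def)
  qed
  have "None \<notin> set (map (\<lambda>g. ev S g xs) gs)" unfolding eq by auto
  moreover have "ev S f ys = Some z" using ev_mono[OF s2] by (simp add: S_def)
  ultimately have "ev S (Cn f gs) xs = Some z" using m2 by simp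
  then show ?case by blast
next
  case (eval_Pr0 f xs y g)
  then obtain s where "ev s f xs = Some y" by auto
  then show ?case by auto
next
  case (eval_PrS f g n xs y z)
  obtain s1 where s1: "ev s1 (Pr f g) (n # xs) = Some y" using eval_PrS by auto
  obtain s2 where s2: "ev s2 g (n # y # xs) = Some z" using eval_PrS by auto
  have "ev (max s1 s2) (Pr f g) (n # xs) = Some y" using ev_mono[OF s1] by simp
  moreover have "ev (max s1 s2) g (n # y # xs) = Some z" using ev_mono[OF s2] by simp
  ultimately have "ev (max s1 s2) (Pr f g) (Suc n # xs) = Some z" by simp
  then show ?case by blast
next
  case (eval_Mn f n xs)
  obtain s0 where s0: "ev s0 f (n # xs) = Some 0" using eval_Mn by auto
  have "\<forall>m<n. \<exists>s. \<exists>k. ev s f (m # xs) = Some (Suc k)" using eval_Mn(3) by blast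
  moreover have mono: "\<And>m s s'. (\<exists>k. ev s f (m # xs) = Some (Suc k)) \<Longrightarrow> s \<le> s' \<Longrightarrow> (\<exists>k. ev s' f (m # xs) = Some (Suc k))"
    using ev_mono by blast
  ultimately obtain S where S: "\<forall>m<n. \<exists>k. ev S f (m # xs) = Some (Suc k)"
    using bounded_choice[of n "\<lambda>m s. \<exists>k. ev s f (m # xs) = Some (Suc k)"] by blast
  define S' where "S' = max (max S s0) (Suc n)"
  have h1: "ev S' f (n # xs) = Some 0" using ev_mono[OF s0] by (simp add: S'_def)
  have h2: "\<forall>m<n. \<exists>k. ev S' f (m # xs) = Some (Suc k)"
  proof (intro allI impI)
    fix m assume "m < n"
    then obtain k where "ev S f (m # xs) = Some (Suc k)" using S by blast
    moreover have "S \<le> S'" by (simp add: S'_def)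
    ultimately show "\<exists>k. ev S' f (m # xs) = Some (Suc k)" using ev_mono by blast
  qed
  have h3: "n < S'" by (simp add: S'_def)
  have mc: "mst (\<lambda>m. ev S' f (m # xs)) S' = n + 2"
    by (rule mst_complete[OF h3]) (use h1 h2 in auto)
  have "ev S' (Mn f) xs = Some n" unfolding ev.simps Let_def mc by simp
  then show ?case by blast
qed

fun enc :: "nat option \<Rightarrow> nat" where
  "enc None = 0" | "enc (Some y) = Suc y"

lemma rc_compose:
  assumes "rc (length Gs) F" "\<And>G. G \<in> set Gs \<Longrightarrow> rc k G"
    "\<And>xs. length xs = k \<Longrightarrow> F (map (\<lambda>G. G xs) Gs) = H xs"
  shows "rc k H"
  using rc_comp[of Gs F k] assms by (auto elim!: rc_cong)

lemma rc_shift: "d + m = k \<Longrightarrow> G \<in> set (map (\<lambda>i zs. zs ! (i + d)) [0..<m]) \<Longrightarrow> rc k G"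
  by (auto intro!: rc_proj)

lemma map_shift: "length zs = d + m \<Longrightarrow> map (\<lambda>G. G zs) (map (\<lambda>i zs. zs ! (i + d)) [0..<m]) = drop d zs"
  by (rule nth_equalityI) (auto simp: add.commute)

lemma rc_prod_list: "(\<And>G. G \<in> set Gs \<Longrightarrow> rc k G) \<Longrightarrow> rc k (\<lambda>xs. prod_list (map (\<lambda>G. G xs) Gs))"
proof (induction Gs)
  case Nil then show ?case by (simp add: rc_const)
next
  case (Cons G Gs) then show ?case by (simp add: rc_mult)
qed

definition B :: "recf \<Rightarrow> nat list \<Rightarrow> nat" where
  "B c xs = enc (ev (hd xs) c (tl xs))"

lemma rc_B: "rc (Suc k) (B c)"
proof (induction c arbitrary: k)
  case Z
  have "rc (Suc k) (\<lambda>xs. 1)" by (rule rc_const)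
  then show ?case by (rule rc_cong) (simp add: B_def)
next
  case Sc
  show ?case
  proof (cases k)
    case 0
    have "rc (Suc k) (\<lambda>xs. 0)" by (rule rc_const)
    then show ?thesis by (rule rc_cong) (auto simp: B_def 0 length_Suc_conv)
  next
    case (Suc k')
    have "rc (Suc k) (\<lambda>xs. Suc (Suc (xs ! 1)))" using Suc by (intro rc_Suc rc_proj') auto
    then show ?thesis by (rule rc_cong) (auto simp: B_def Suc length_Suc_conv)
  qed
next
  case (Proj i)
  show ?case
  proof (cases "i < k")
    case False
    have "rc (Suc k) (\<lambda>xs. 0)" by (rule rc_const)
    then show ?thesis using False by (elim rc_cong) (auto simp: B_def length_Suc_conv)
  next
    case True
    have "rc (Suc k) (\<lambda>xs. Suc (xs ! Suc i))" using True by (intro rc_Suc rc_proj') auto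
    then show ?thesis using True by (elim rc_cong) (auto simp: B_def length_Suc_conv)
  qed
next
  case (Cn f gs)
  define Gs where "Gs = (\<lambda>xs. xs ! 0) # map (\<lambda>g xs. B g xs - 1) gs"
  have r1: "rc (Suc k) (\<lambda>xs. B f (map (\<lambda>G. G xs) Gs))"
  proof (rule rc_comp)
    show "rc (length Gs) (B f)" using Cn.IH(1)[of "length gs"] by (simp add: Gs_def)
    show "\<forall>G\<in>set Gs. rc (Suc k) G" using Cn.IH(2) by (auto simp: Gs_def intro!: rc_pred rc_proj)
  qed
  have r2: "rc (Suc k) (\<lambda>xs. prod_list (map (\<lambda>G. G xs) (map B gs)))"
    using Cn.IH(2) by (intro rc_prod_list) auto
  have "rc (Suc k) (\<lambda>xs. if prod_list (map (\<lambda>G. G xs) (map B gs)) = 0 then 0 else B f (map (\<lambda>G. G xs) Gs))"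
    using r1 r2 by (intro rc_if rc_const)
  then show ?case
  proof (rule rc_cong)
    fix xs :: "nat list" assume "length xs = Suc k"
    then obtain s ys where xs: "xs = s # ys" by (cases xs) auto
    have p: "prod_list (map (\<lambda>G. G xs) (map B gs)) = 0 \<longleftrightarrow> None \<in> set (map (\<lambda>g. ev s g ys) gs)"
    proof -
      have "prod_list (map (\<lambda>G. G xs) (map B gs)) = 0 \<longleftrightarrow> (\<exists>g\<in>set gs. B g xs = 0)"
        by (auto simp: prod_list_zero_iff)
      also have "\<dots> \<longleftrightarrow> None \<in> set (map (\<lambda>g. ev s g ys) gs)"
        unfolding B_def xs by (force elim: enc.elims)
      finally show ?thesis .
    qed
    show "(if prod_list (map (\<lambda>G. G xs) (map B gs)) = 0 then 0 else B f (map (\<lambda>G. G xs) Gs)) = B (Cn f gs) xs"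
    proof (cases "None \<in> set (map (\<lambda>g. ev s g ys) gs)")
      case True
      then show ?thesis using p by (simp add: B_def xs)
    next
      case False
      have m: "map (\<lambda>g. B g xs - 1) gs = map (\<lambda>g. the (ev s g ys)) gs"
      proof (rule map_cong[OF refl])
        fix g assume "g \<in> set gs"
        then have "ev s g ys \<noteq> None" using False by force
        then show "B g xs - 1 = the (ev s g ys)" by (auto simp: B_def xs)
      qed
      have mm: "map (\<lambda>G. G xs) Gs = s # map (\<lambda>g. the (ev s g ys)) gs"
        unfolding Gs_def list.map map_map o_def m by (simp add: xs)
      have "prod_list (map (\<lambda>G. G xs) (map B gs)) \<noteq> 0" using p False by simp
      then show ?thesis unfolding mm using False by (simp add: B_def xs)
    qed
  qed
next
  case (Pr f g)
  show ?case
  proof (cases k)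
    case 0
    have "rc (Suc k) (\<lambda>xs. 0)" by (rule rc_const)
    then show ?thesis by (rule rc_cong) (auto simp: B_def 0 length_Suc_conv)
  next
    case (Suc k')
    define F1 where "F1 = B f"
    define Bb where "Bb = (\<lambda>zs. B g (zs ! 2 # zs ! 0 # (zs ! 1 - 1) # drop 3 zs))"
    define G1 where "G1 = (\<lambda>zs. if zs ! 1 = 0 then 0 else Bb zs)"
    have rBb: "rc (Suc (Suc (Suc k'))) Bb"
    proof (rule rc_compose[where Gs = "[\<lambda>zs. zs ! 2, \<lambda>zs. zs ! 0, \<lambda>zs. zs ! 1 - 1] @ map (\<lambda>i zs. zs ! (i + 3)) [0..<k']"])
      show "rc (length ([\<lambda>zs. zs ! 2, \<lambda>zs. zs ! 0, \<lambda>zs. zs ! 1 - 1] @ map (\<lambda>i zs. zs ! (i + 3)) [0..<k'])) (B g)"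
        using Pr.IH(2)[of "Suc (Suc k')"] by simp
      fix G :: "nat list \<Rightarrow> nat" assume "G \<in> set ([\<lambda>zs. zs ! 2, \<lambda>zs. zs ! 0, \<lambda>zs. zs ! 1 - 1] @ map (\<lambda>i zs. zs ! (i + 3)) [0..<k'])"
      then show "rc (Suc (Suc (Suc k'))) G"
        by (auto intro!: rc_proj rc_pred intro: rc_shift[of 3 k'])
    next
      fix zs :: "nat list" assume "length zs = Suc (Suc (Suc k'))"
      then show "B g (map (\<lambda>G. G zs) ([\<lambda>zs. zs ! 2, \<lambda>zs. zs ! 0, \<lambda>zs. zs ! 1 - 1] @ map (\<lambda>i zs. zs ! (i + 3)) [0..<k'])) = Bb zs"
        by (simp add: Bb_def map_shift del: map_map)
    qed
    have rG1: "rc (Suc (Suc (Suc k'))) G1" unfolding G1_def using rBb by (intro rc_if rc_const rc_proj') auto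
    have rF1: "rc (Suc k') F1" unfolding F1_def by (rule Pr.IH(1))
    have rP: "rc (Suc (Suc k')) (\<lambda>xs. prec F1 G1 (hd xs) (tl xs))" by (rule rc_prec[OF rF1 rG1])
    have peq: "prec F1 G1 j (s # ys) = enc (oprec (ev s f) (ev s g) j ys)" for j s ys
    proof (induction j)
      case 0 then show ?case by (simp add: F1_def B_def)
    next
      case (Suc j)
      show ?case
      proof (cases "oprec (ev s f) (ev s g) j ys")
        case None then show ?thesis using Suc by (simp add: G1_def)
      next
        case (Some y) then show ?thesis using Suc by (simp add: G1_def Bb_def B_def)
      qed
    qed
    show ?thesis
    proof (rule rc_compose[OF _ _ _])
      show "rc (length ([\<lambda>xs. xs ! 1, \<lambda>xs. xs ! 0] @ map (\<lambda>i xs. xs ! (i + 2)) [0..<k'])) (\<lambda>xs. prec F1 G1 (hd xs) (tl xs))"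
        using rP by simp
      fix G :: "nat list \<Rightarrow> nat" assume "G \<in> set ([\<lambda>xs. xs ! 1, \<lambda>xs. xs ! 0] @ map (\<lambda>i xs. xs ! (i + 2)) [0..<k'])"
      then show "rc (Suc k) G" unfolding Suc
        by (auto intro!: rc_proj intro: rc_shift[of 2 k'])
    next
      fix xs :: "nat list" assume l: "length xs = Suc k"
      then obtain s n ys where xs: "xs = s # n # ys" and ly: "length ys = k'"
        unfolding Suc by (auto simp: length_Suc_conv)
      have "map (\<lambda>G. G xs) ([\<lambda>xs. xs ! 1, \<lambda>xs. xs ! 0] @ map (\<lambda>i xs. xs ! (i + 2)) [0..<k']) = n # s # ys"
        using map_shift[of xs 2 k'] l unfolding Suc xs by (simp del: map_map)
      then show "(\<lambda>xs. prec F1 G1 (hd xs) (tl xs)) (map (\<lambda>G. G xs) ([\<lambda>xs. xs ! 1, \<lambda>xs. xs ! 0] @ map (\<lambda>i xs. xs ! (i + 2)) [0..<k'])) = B (Pr f g) xs"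
        by (simp add: peq B_def xs)
    qed
  qed
next
  case (Mn f)
  define Bb where "Bb = (\<lambda>zs. B f (zs ! 2 # zs ! 0 # drop 3 zs))"
  define G1 where "G1 = (\<lambda>zs. if zs ! 1 = 0 then (if Bb zs = 0 then 1 else if Bb zs - 1 = 0 then Suc (Suc (zs ! 0)) else 0) else zs ! 1)"
  define F1 where "F1 = (\<lambda>zs::nat list. 0::nat)"
  have rBb: "rc (Suc (Suc (Suc k))) Bb"
  proof (rule rc_compose[where Gs = "[\<lambda>zs. zs ! 2, \<lambda>zs. zs ! 0] @ map (\<lambda>i zs. zs ! (i + 3)) [0..<k]"])
    show "rc (length ([\<lambda>zs. zs ! 2, \<lambda>zs. zs ! 0] @ map (\<lambda>i zs. zs ! (i + 3)) [0..<k])) (B f)"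
      using Mn.IH[of "Suc k"] by simp
    fix G :: "nat list \<Rightarrow> nat" assume "G \<in> set ([\<lambda>zs. zs ! 2, \<lambda>zs. zs ! 0] @ map (\<lambda>i zs. zs ! (i + 3)) [0..<k])"
    then show "rc (Suc (Suc (Suc k))) G"
      by (auto intro!: rc_proj intro: rc_shift[of 3 k])
  next
    fix zs :: "nat list" assume "length zs = Suc (Suc (Suc k))"
    then show "B f (map (\<lambda>G. G zs) ([\<lambda>zs. zs ! 2, \<lambda>zs. zs ! 0] @ map (\<lambda>i zs. zs ! (i + 3)) [0..<k])) = Bb zs"
      by (simp add: Bb_def map_shift del: map_map)
  qed
  have rG1: "rc (Suc (Suc (Suc k))) G1" unfolding G1_def using rBb
    by (intro rc_if rc_const rc_proj' rc_Suc rc_pred) auto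
  have rF1: "rc (Suc k) F1" unfolding F1_def by (rule rc_const)
  have rP: "rc (Suc (Suc k)) (\<lambda>xs. prec F1 G1 (hd xs) (tl xs))" by (rule rc_prec[OF rF1 rG1])
  have peq: "prec F1 G1 j (s # ys) = mst (\<lambda>m. ev s f (m # ys)) j" for j s ys
  proof (induction j)
    case 0 then show ?case by (simp add: F1_def)
  next
    case (Suc j)
    show ?case
    proof (cases "mst (\<lambda>m. ev s f (m # ys)) j = 0")
      case False then show ?thesis using Suc by (simp add: G1_def)
    next
      case True
      then show ?thesis using Suc
        by (cases "ev s f (j # ys)") (auto simp: G1_def Bb_def B_def split: nat.splits)
    qed
  qed
  have rQ: "rc (Suc k) (\<lambda>xs. prec F1 G1 (xs ! 0) xs)"
  proof (rule rc_compose[where Gs = "[\<lambda>xs. xs ! 0, \<lambda>xs. xs ! 0] @ map (\<lambda>i xs. xs ! (i + 1)) [0..<k]"])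
    show "rc (length ([\<lambda>xs. xs ! 0, \<lambda>xs. xs ! 0] @ map (\<lambda>i xs. xs ! (i + 1)) [0..<k])) (\<lambda>xs. prec F1 G1 (hd xs) (tl xs))"
      using rP by simp
    fix G :: "nat list \<Rightarrow> nat" assume "G \<in> set ([\<lambda>xs. xs ! 0, \<lambda>xs. xs ! 0] @ map (\<lambda>i xs. xs ! (i + 1)) [0..<k])"
    then show "rc (Suc k) G"
      by (auto intro!: rc_proj intro: rc_shift[of 1 k])
  next
    fix xs :: "nat list" assume l: "length xs = Suc k"
    then obtain s ys where xs: "xs = s # ys" by (auto simp: length_Suc_conv)
    have "map (\<lambda>G. G xs) ([\<lambda>xs. xs ! 0, \<lambda>xs. xs ! 0] @ map (\<lambda>i xs. xs ! (i + 1)) [0..<k]) = s # s # ys"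
      using map_shift[of xs 1 k] l unfolding xs by (simp del: map_map)
    then show "(\<lambda>xs. prec F1 G1 (hd xs) (tl xs)) (map (\<lambda>G. G xs) ([\<lambda>xs. xs ! 0, \<lambda>xs. xs ! 0] @ map (\<lambda>i xs. xs ! (i + 1)) [0..<k])) = prec F1 G1 (xs ! 0) xs"
      by (simp add: xs)
  qed
  have "rc (Suc k) (\<lambda>xs. prec F1 G1 (xs ! 0) xs - 1)" using rQ by (rule rc_pred)
  then show ?case
  proof (rule rc_cong)
    fix xs :: "nat list" assume l: "length xs = Suc k"
    then obtain s ys where xs: "xs = s # ys" by (auto simp: length_Suc_conv)
    show "prec F1 G1 (xs ! 0) xs - 1 = B (Mn f) xs"
      by (simp add: xs peq B_def Let_def) linarith
  qed
qed

lemma rc_triangle_base: "rc 1 (\<lambda>xs. triangle (xs ! 0))"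
proof -
  have "rc (Suc 0) (\<lambda>xs. prec (\<lambda>ys. 0) (\<lambda>zs. zs ! 1 + Suc (zs ! 0)) (hd xs) (tl xs))"
    by (intro rc_prec rc_add rc_Suc rc_proj' rc_const) auto
  moreover have "prec (\<lambda>ys. 0) (\<lambda>zs. zs ! 1 + Suc (zs ! 0)) n ys = triangle n" for n ys
    by (induction n) auto
  ultimately show ?thesis
    by (elim rc_cong') (auto simp: hd_conv_nth nth_tl length_Suc_conv)
qed

lemma rc_pe: "rc k A \<Longrightarrow> rc k C \<Longrightarrow> rc k (\<lambda>xs. prod_encode (A xs, C xs))"
proof -
  assume a: "rc k A" "rc k C"
  have "rc k (\<lambda>xs. (\<lambda>ys. triangle (ys ! 0)) [A xs + C xs] + A xs)"
    using a by (intro rc_add rc_comp1[OF rc_triangle_base])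
  then show ?thesis by (rule rc_cong) (simp add: prod_encode_def)
qed

lemma ce_search:
  assumes ce: "ce_set {prod_encode (x, y) | x y. E x y}" and h: "computable h"
    and surj: "\<forall>y. \<exists>x. E (h x) y"
  shows "\<exists>k. computable k \<and> (\<forall>y. E (h (k y)) y)"
proof -
  obtain c where c: "\<And>z. z \<in> {prod_encode (x, y) | x y. E x y} \<longleftrightarrow> (\<exists>v. eval c [z] v)"
    using ce unfolding ce_set_def by blast
  have Ec: "E a b \<longleftrightarrow> (\<exists>v. eval c [prod_encode (a, b)] v)" for a b
    using c[of "prod_encode (a, b)"] by (auto simp: prod_encode_eq)
  define tm where "tm w x y = B c [w, prod_encode (h x, y)]" for w x y
  have rB: "rc 2 (B c)" using rc_B[of 1 c] by (simp add: numeral_2_eq_2)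
  have rtm: "rc k (\<lambda>xs. tm (W xs) (X xs) (Y xs))" if "rc k W" "rc k X" "rc k Y" for k W X Y
  proof -
    have "rc k (\<lambda>xs. h (X xs))" by (rule rc_fun[OF h that(2)])
    then have "rc k (\<lambda>xs. B c [W xs, prod_encode (h (X xs), Y xs)])"
      by (intro rc_comp2[OF rB] that rc_pe)
    then show ?thesis unfolding tm_def .
  qed
  have tm_pos: "tm w x y \<noteq> 0 \<longleftrightarrow> ev w c [prod_encode (h x, y)] \<noteq> None" for w x y
    unfolding tm_def B_def by (cases "ev w c [prod_encode (h x, y)]") auto
  have tm_E: "tm w x y \<noteq> 0 \<Longrightarrow> E (h x) y" for w x y
  proof -
    assume "tm w x y \<noteq> 0"
    then obtain v where "ev w c [prod_encode (h x, y)] = Some v" using tm_pos by auto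
    then have "eval c [prod_encode (h x, y)] v" by (rule ev_sound)
    then show ?thesis using Ec by blast
  qed
  define G where "G = (\<lambda>zs::nat list. zs ! 1 + tm (zs ! 2) (zs ! 0) (zs ! 3))"
  have rG: "rc 4 G" unfolding G_def by (intro rc_add rc_proj' rtm) auto
  have rS: "rc 3 (\<lambda>xs. prec (\<lambda>_. 0) G (hd xs) (tl xs))"
    using rc_prec[of 2 "\<lambda>_. 0" G] rG by (simp add: rc_const numeral_eq_Suc)
  have Seq: "prec (\<lambda>_. 0) G n [w, y] = (\<Sum>x<n. tm w x y)" for n w y
    by (induction n) (auto simp: G_def)
  define P1 where "P1 = (\<lambda>xs::nat list. if (\<Sum>x<xs ! 0. tm (xs ! 0) x (xs ! 1)) = 0 then 1 else (0::nat))"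
  have rP1: "rc 2 P1"
  proof -
    have "rc 2 (\<lambda>xs. (\<lambda>xs. prec (\<lambda>_. 0) G (hd xs) (tl xs)) (map (\<lambda>G. G xs) [\<lambda>xs. xs ! 0, \<lambda>xs. xs ! 0, \<lambda>xs. xs ! 1]))"
      by (rule rc_comp) (use rS in \<open>auto simp: numeral_3_eq_3\<close>)
    then have "rc 2 (\<lambda>xs. if (\<lambda>xs. prec (\<lambda>_. 0) G (hd xs) (tl xs)) (map (\<lambda>G. G xs) [\<lambda>xs. xs ! 0, \<lambda>xs. xs ! 0, \<lambda>xs. xs ! 1]) = 0 then 1 else 0)"
      by (intro rc_if rc_const)
    then show ?thesis by (rule rc_cong) (simp add: P1_def Seq)
  qed
  have exW: "\<exists>w. P1 (w # [y]) = 0" for y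
  proof -
    obtain x where x: "E (h x) y" using surj by blast
    then obtain v where "eval c [prod_encode (h x, y)] v" using Ec by blast
    then obtain s where s: "ev s c [prod_encode (h x, y)] = Some v" using ev_complete by blast
    define w where "w = max s (Suc x)"
    have "ev w c [prod_encode (h x, y)] = Some v" using ev_mono[OF s] by (simp add: w_def)
    then have t: "tm w x y \<noteq> 0" using tm_pos by simp
    have "x < w" by (simp add: w_def)
    then have "(\<Sum>x<w. tm w x y) \<noteq> 0" using t by (simp add: sum_eq_0_iff) blast
    then show ?thesis unfolding P1_def by auto
  qed
  define W where "W y = (LEAST w. P1 (w # [y]) = 0)" for y
  have rW: "rc 1 (\<lambda>xs. W (xs ! 0))"
  proof -
    have "rc 1 (\<lambda>xs. LEAST n. P1 (n # xs) = 0)"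
      by (rule rc_mn) (use rP1 exW in \<open>auto simp: numeral_2_eq_2 length_Suc_conv\<close>)
    then show ?thesis by (rule rc_cong) (auto simp: W_def length_Suc_conv)
  qed
  have W_prop: "(\<Sum>x<W y. tm (W y) x y) \<noteq> 0" for y
  proof -
    have "P1 (W y # [y]) = 0" unfolding W_def using exW[of y] by (rule LeastI_ex)
    then show ?thesis unfolding P1_def by (auto split: if_splits)
  qed
  define P2 where "P2 = (\<lambda>xs::nat list. if tm (W (xs ! 1)) (xs ! 0) (xs ! 1) = 0 then 1 else (0::nat))"
  have rP2: "rc 2 P2"
  proof -
    have "rc 2 (\<lambda>xs. W (xs ! 1))"
      using rc_comp1[OF rW rc_proj[of 1 2]] by simp
    then show ?thesis unfolding P2_def by (intro rc_if rc_const rtm rc_proj') auto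
  qed
  have exK: "\<exists>x. P2 (x # [y]) = 0" for y
    using W_prop[of y] unfolding P2_def by (auto simp: sum_eq_0_iff split: if_splits)
  define K where "K y = (LEAST x. P2 (x # [y]) = 0)" for y
  have rK: "rc 1 (\<lambda>xs. K (xs ! 0))"
  proof -
    have "rc 1 (\<lambda>xs. LEAST n. P2 (n # xs) = 0)"
      by (rule rc_mn) (use rP2 exK in \<open>auto simp: numeral_2_eq_2 length_Suc_conv\<close>)
    then show ?thesis by (rule rc_cong) (auto simp: K_def length_Suc_conv)
  qed
  have "E (h (K y)) y" for y
  proof -
    have "P2 (K y # [y]) = 0" unfolding K_def using exK[of y] by (rule LeastI_ex)
    then have "tm (W y) (K y) y \<noteq> 0" unfolding P2_def by (auto split: if_splits)
    then show ?thesis by (rule tm_E)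
  qed
  moreover have "computable K" unfolding computable_rc by (rule rK)
  ultimately show ?thesis by blast
qed

lemma IdN_mod: "IdN m a b \<longleftrightarrow> a mod m = b mod m"
proof -
  have "IdN m a b \<longleftrightarrow> int a mod int m = int b mod int m"
    unfolding IdN_def by (simp add: mod_eq_dvd_iff)
  also have "\<dots> \<longleftrightarrow> a mod m = b mod m"
    by (metis of_nat_eq_iff of_nat_mod)
  finally show ?thesis .
qed

lemma equivp_resp: "equivp R \<Longrightarrow> R a a' \<Longrightarrow> R b b' \<Longrightarrow> (R a b \<longleftrightarrow> R a' b')"
  by (meson equivp_symp equivp_transp)

lemma funpow_red: "(\<forall>x y. E x y \<longleftrightarrow> E (h x) (h y)) \<Longrightarrow> E ((h ^^ i) x) ((h ^^ i) y) \<longleftrightarrow> E x y"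
  by (induction i) auto

lemma self_full:
  assumes nd: "\<not> IdR \<le>\<^sub>c E" and eq: "equivp E" and h: "computable h"
    and red: "\<forall>x y. E x y \<longleftrightarrow> E (h x) (h y)"
  shows "\<forall>y. \<exists>x. E (h x) y"
proof (rule ccontr)
  assume "\<not> (\<forall>y. \<exists>x. E (h x) y)"
  then obtain a where a: "\<And>x. \<not> E (h x) a" by blast
  define p where "p i = (h ^^ i) a" for i
  have "rc (Suc 0) (\<lambda>xs. prec (\<lambda>_. a) (\<lambda>zs. h (zs ! 1)) (hd xs) (tl xs))"
    by (intro rc_prec rc_const rc_fun[OF h] rc_proj') auto
  moreover have "prec (\<lambda>_. a) (\<lambda>zs. h (zs ! 1)) n ys = p n" for n ys
    by (induction n) (auto simp: p_def)
  ultimately have "rc 1 (\<lambda>xs. p (xs ! 0))"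
    by (elim rc_cong') (auto simp: hd_conv_nth length_Suc_conv)
  then have cp: "computable p" by (simp add: computable_rc)
  have ne: "\<not> E (p i) (p j)" if "i < j" for i j
  proof -
    obtain d where d: "j = i + Suc d" using \<open>i < j\<close> less_iff_Suc_add by auto
    have "p j = (h ^^ i) (h ((h ^^ d) a))" unfolding p_def d
      by (simp add: funpow_add funpow_Suc_right funpow_swap1 del: funpow.simps)
    then have "E (p i) (p j) \<longleftrightarrow> E a (h ((h ^^ d) a))"
      unfolding p_def using funpow_red[OF red] by simp
    moreover have "\<not> E a (h ((h ^^ d) a))" using a eq by (meson equivp_symp)
    ultimately show ?thesis by simp
  qed
  have "IdR i j \<longleftrightarrow> E (p i) (p j)" for i j
  proof (cases i j rule: linorder_cases)
    case less then show ?thesis using ne by (simp add: IdR_def)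
  next
    case equal then show ?thesis using eq by (simp add: IdR_def equivp_reflp)
  next
    case greater then show ?thesis using ne eq by (metis IdR_def equivp_symp less_not_refl)
  qed
  then have "IdR \<le>\<^sub>c E" unfolding creduce_def using cp by blast
  then show False using nd by simp
qed

theorem proposition2:
  fixes E R :: "nat \<Rightarrow> nat \<Rightarrow> bool"
  assumes "ceer E" and "dark E" and "minimal_er E"
    and "equivp R" and "inf_classes R"
    and "\<forall>x y. E x y \<longrightarrow> R x y"
  shows "minimal_er R"
proof -
  have eqE: "equivp E" and ceE: "ce_set {prod_encode (x, y) | x y. E x y}"
    using assms(1) unfolding ceer_def by auto
  have nd: "\<not> IdR \<le>\<^sub>c E" using assms(2) unfolding dark_def by auto
  have mE: "\<And>T. equivp T \<Longrightarrow> T \<le>\<^sub>c E \<Longrightarrow> T \<equiv>\<^sub>c E \<or> (\<exists>n\<ge>1. T \<equiv>\<^sub>c IdN n)"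
    using assms(3) unfolding minimal_er_def by auto
  have eqR: "equivp R" by (rule assms(4))
  have ER: "\<And>x y. E x y \<Longrightarrow> R x y" using assms(6) by auto
  have "T \<equiv>\<^sub>c R \<or> (\<exists>n\<ge>1. T \<equiv>\<^sub>c IdN n)" if eqT: "equivp T" and TR: "T \<le>\<^sub>c R" for T
  proof -
    obtain f where cf: "computable f" and fT: "\<And>x y. T x y \<longleftrightarrow> R (f x) (f y)"
      using TR unfolding creduce_def by blast
    define Ef where "Ef x y = E (f x) (f y)" for x y
    have eqEf: "equivp Ef"
    proof (rule equivpI)
      show "reflp Ef" unfolding Ef_def reflp_def using eqE by (simp add: equivp_reflp)
      show "symp Ef" unfolding Ef_def symp_def using eqE by (meson equivp_symp)
      show "transp Ef" unfolding Ef_def transp_def using eqE by (meson equivp_transp)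
    qed
    have "Ef \<le>\<^sub>c E" unfolding creduce_def Ef_def using cf by blast
    from mE[OF eqEf this] show ?thesis
    proof
      assume "Ef \<equiv>\<^sub>c E"
      then obtain g where cg: "computable g" and gE: "\<And>x y. E x y \<longleftrightarrow> Ef (g x) (g y)"
        unfolding cequiv_def creduce_def by blast
      define h where "h x = f (g x)" for x
      have ch: "computable h" unfolding h_def by (rule computable_comp[OF cf cg])
      have red: "\<forall>x y. E x y \<longleftrightarrow> E (h x) (h y)" using gE by (simp add: h_def Ef_def)
      have "\<forall>y. \<exists>x. E (h x) y" by (rule self_full[OF nd eqE ch red])
      from ce_search[OF ceE ch this] obtain k where ck: "computable k" and kE: "\<And>y. E (h (k y)) y"
        by blast
      have "R x y \<longleftrightarrow> T (g (k x)) (g (k y))" for x y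
      proof -
        have "T (g (k x)) (g (k y)) \<longleftrightarrow> R (h (k x)) (h (k y))" by (simp add: fT h_def)
        also have "\<dots> \<longleftrightarrow> R x y" using equivp_resp[OF eqR ER[OF kE[of x]] ER[OF kE[of y]]] .
        finally show ?thesis by simp
      qed
      moreover have "computable (\<lambda>x. g (k x))" by (rule computable_comp[OF cg ck])
      ultimately have "R \<le>\<^sub>c T" unfolding creduce_def by blast
      then show ?thesis using TR unfolding cequiv_def by blast
    next
      assume "\<exists>n\<ge>1. Ef \<equiv>\<^sub>c IdN n"
      then obtain n u where n: "n \<ge> 1" and cu: "computable u" and uE: "\<And>x y. Ef x y \<longleftrightarrow> u x mod n = u y mod n"
        unfolding cequiv_def creduce_def IdN_mod by blast
      have Tr: "T x y" if "u x mod n = u y mod n" for x y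
        using that uE[of x y] ER fT unfolding Ef_def by blast
      have Teq: "T x y \<longleftrightarrow> T x = T y" for x y using eqT by (simp add: equivp_def)
      define rep where "rep i = (SOME x. u x mod n = i)" for i
      have rep: "u (rep (u x mod n)) mod n = u x mod n" for x
        unfolding rep_def by (rule someI[of _ x]) simp
      have Trep: "T x = T (rep (u x mod n))" for x
        using Tr[of x "rep (u x mod n)"] rep[of x] Teq by simp
      define S where "S = range T"
      have "S \<subseteq> (\<lambda>i. T (rep i)) ` {..<n}"
      proof
        fix P assume "P \<in> S"
        then obtain x where "P = T x" unfolding S_def by blast
        moreover have "u x mod n < n" using n by simp
        ultimately show "P \<in> (\<lambda>i. T (rep i)) ` {..<n}" using Trep by blast
      qed
      then have fS: "finite S" by (rule finite_subset) simp
      obtain b where b: "bij_betw b S {0..<card S}" using ex_bij_betw_finite_nat[OF fS] by blast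
      define m where "m = card S"
      have m: "m \<ge> 1" unfolding m_def using fS by (simp add: S_def Suc_le_eq card_gt_0_iff)
      define phi where "phi x = b (T x)" for x
      have phi_lt: "phi x < m" for x
        using b unfolding phi_def m_def S_def bij_betw_def by auto
      have phiT: "T x y \<longleftrightarrow> phi x = phi y" for x y
      proof -
        have "inj_on b S" using b by (simp add: bij_betw_def)
        then have "b (T x) = b (T y) \<longleftrightarrow> T x = T y" unfolding S_def by (auto dest: inj_onD)
        then show ?thesis using Teq unfolding phi_def by simp
      qed
      have phi_surj: "\<exists>x. phi x = j" if "j < m" for j
      proof -
        have "j \<in> b ` S" using b that unfolding m_def bij_betw_def by auto
        then show ?thesis unfolding phi_def S_def by auto
      qed
      define t where "t i = phi (rep i)" for i
      have phit: "phi x = t (u x mod n)" for x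
        unfolding t_def phi_def using Trep by simp
      have cphi: "computable phi"
      proof -
        have "computable (\<lambda>z. t (z mod n))" using n by (intro computable_periodic) simp
        from computable_comp[OF this cu] show ?thesis by (simp add: phit[symmetric])
      qed
      define rho where "rho j = (SOME x. phi x = j)" for j
      define psi where "psi i = rho (i mod m)" for i
      have cpsi: "computable psi" unfolding psi_def using m by (intro computable_periodic) simp
      have phipsi: "phi (psi i) = i mod m" for i
      proof -
        have "i mod m < m" using m by simp
        then obtain x where "phi x = i mod m" using phi_surj by blast
        then show ?thesis unfolding psi_def rho_def by (rule someI)
      qed
      have "T \<le>\<^sub>c IdN m"
        unfolding creduce_def IdN_mod using cphi phiT phi_lt by (auto intro!: exI[of _ phi])
      moreover have "IdN m \<le>\<^sub>c T"
        unfolding creduce_def IdN_mod using cpsi phiT phipsi by (auto intro!: exI[of _ psi])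
      ultimately have "T \<equiv>\<^sub>c IdN m" unfolding cequiv_def by blast
      then show ?thesis using m by blast
    qed
  qed
  then show ?thesis unfolding minimal_er_def using assms(5) by blast
qed

end
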